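(* For the $2$-server problem on the line, for any instance $I$, any prediction, and any $\lambda\in[0,1]$, there is $c\ge0$ depending only on the initial configuration such that $\mathrm{LambdaDC}(I)\le(1+\lambda)\cdot\mathrm{FtP}(I)+c$.
   Context: The $2$-server problem on the line: servers on $\mathbb{R}$ labeled $s_1\le s_2$, requests revealed online and served by moving a server to them; cost = total distance moved. A prediction gives for each request $r_t$ an index $p_t\in\{1,2\}$; FtP is the algorithm serving each request by the predicted server (relabeling servers by position), and $\mathrm{FtP}(I)$ its cost for the given prediction. LambdaDC (given the same prediction): if $r_t<s_1$ or $r_t>s_2$, move only the closest server; if $s_1<r_t<s_2$ and $p_t=1$, move $s_1$ at speed $1$ and $s_2$ at speed $\lambda$ towards $r_t$ until one reaches it; if $p_t=2$, the speeds are swapped. *)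

theory Defs
  imports Complex_Main
begin

text \<open>Configuration of the two servers: a pair (s1, s2) with s1 \<le> s2 (servers labeled
by position). A request is a real number, a prediction is an index in {1,2}.\<close>

type_synonym config = "real \<times> real"

definition ftp_step :: "config \<Rightarrow> real \<Rightarrow> nat \<Rightarrow> config \<times> real" where
  "ftp_step s r p =
     (let (a, b) = s in
      if p = 1 then ((min r b, max r b), \<bar>a - r\<bar>)
      else ((min a r, max a r), \<bar>b - r\<bar>))"

fun ftp_cost :: "config \<Rightarrow> (real \<times> nat) list \<Rightarrow> real" where
  "ftp_cost s [] = 0"
| "ftp_cost s ((r, p) # rest) =
     (let (s', c) = ftp_step s r p in c + ftp_cost s' rest)"

text \<open>If s1 < r < s2 and p = 1, s1 moves with speed 1 and s2 with speed \<lambda>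
towards r until one of them reaches r (time t); for p = 2 the speeds are swapped.\<close>
definition lambdadc_step :: "real \<Rightarrow> config \<Rightarrow> real \<Rightarrow> nat \<Rightarrow> config \<times> real" where
  "lambdadc_step lam s r p =
     (let (a, b) = s in
      if r \<le> a then ((r, b), a - r)
      else if b \<le> r then ((a, r), r - b)
      else if p = 1 then
        (let t = (if lam * (r - a) \<le> b - r then r - a else (b - r) / lam)
         in ((a + t, b - lam * t), (1 + lam) * t))
      else
        (let t = (if lam * (b - r) \<le> r - a then b - r else (r - a) / lam)
         in ((a + lam * t, b - t), (1 + lam) * t)))"

fun lambdadc_cost :: "real \<Rightarrow> config \<Rightarrow> (real \<times> nat) list \<Rightarrow> real" where
  "lambdadc_cost lam s [] = 0"
| "lambdadc_cost lam s ((r, p) # rest) =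
     (let (s', c) = lambdadc_step lam s r p in c + lambdadc_cost lam s' rest)"

end

theory Submission imports Defs begin

definition Phi :: "real \<Rightarrow> config \<Rightarrow> config \<Rightarrow> real" where
  "Phi lam s f = (1+lam)*(\<bar>fst s - fst f\<bar> + \<bar>snd s - snd f\<bar>) + lam*(snd s - fst s)"

lemma ftp_step_eq: "ftp_step (x,y) r p = (if p = 1 then ((min r y, max r y), \<bar>x - r\<bar>)
      else ((min x r, max x r), \<bar>y - r\<bar>))"
  by (simp add: ftp_step_def)

lemma mid_gen:
  assumes l0: "0 \<le> lam"
    and C: "C = (1+lam)*t" and a': "a' = a + t" and b': "b' = b - lam*t"
    and K: "t - lam*t + \<bar>a' - x'\<bar> + \<bar>b' - y'\<bar> - \<bar>a - x\<bar> - \<bar>b - y\<bar> \<le> d"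
  shows "C + Phi lam (a',b') (x',y') \<le> (1+lam)*d + Phi lam (a,b) (x,y)"
proof -
  have "(1+lam)*(t - lam*t + \<bar>a' - x'\<bar> + \<bar>b' - y'\<bar> - \<bar>a - x\<bar> - \<bar>b - y\<bar>) \<le> (1+lam)*d"
    using K l0 by (intro mult_left_mono) auto
  then show ?thesis unfolding Phi_def C a' b' by (simp add: algebra_simps)
qed

lemma mid_gen2:
  assumes l0: "0 \<le> lam"
    and C: "C = (1+lam)*t" and a': "a' = a + lam*t" and b': "b' = b - t"
    and K: "t - lam*t + \<bar>a' - x'\<bar> + \<bar>b' - y'\<bar> - \<bar>a - x\<bar> - \<bar>b - y\<bar> \<le> d"
  shows "C + Phi lam (a',b') (x',y') \<le> (1+lam)*d + Phi lam (a,b) (x,y)"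
proof -
  have "(1+lam)*(t - lam*t + \<bar>a' - x'\<bar> + \<bar>b' - y'\<bar> - \<bar>a - x\<bar> - \<bar>b - y\<bar>) \<le> (1+lam)*d"
    using K l0 by (intro mult_left_mono) auto
  then show ?thesis unfolding Phi_def C a' b' by (simp add: algebra_simps)
qed

lemma out_gen:
  assumes l0: "0 \<le> lam"
    and K: "(a - a') + (b' - b) + \<bar>a' - x'\<bar> + \<bar>b' - y'\<bar> - \<bar>a - x\<bar> - \<bar>b - y\<bar> \<le> d"
    and C: "C = (a - a') + (b' - b)"
  shows "C + Phi lam (a',b') (x',y') \<le> (1+lam)*d + Phi lam (a,b) (x,y)"
proof -
  have "(1+lam)*((a - a') + (b' - b) + \<bar>a' - x'\<bar> + \<bar>b' - y'\<bar> - \<bar>a - x\<bar> - \<bar>b - y\<bar>) \<le> (1+lam)*d"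
    using K l0 by (intro mult_left_mono) auto
  then show ?thesis unfolding Phi_def C by (simp add: algebra_simps)
qed

lemma K1:
  fixes a b x y r t u :: real
  assumes "a < r" "r < b" "x \<le> y" "0 \<le> u" "u \<le> t" "t \<le> r - a" "u \<le> b - r"
  shows "t - u + \<bar>a + t - min r y\<bar> + \<bar>b - u - max r y\<bar> - \<bar>a - x\<bar> - \<bar>b - y\<bar> \<le> \<bar>x - r\<bar>"
  using assms by (simp add: min_def max_def abs_if split: if_splits) linarith?

lemma K2:
  fixes a b x y r t u :: real
  assumes "a < r" "r < b" "x \<le> y" "0 \<le> u" "u \<le> t" "t \<le> b - r" "u \<le> r - a"
  shows "t - u + \<bar>a + u - min x r\<bar> + \<bar>b - t - max x r\<bar> - \<bar>a - x\<bar> - \<bar>b - y\<bar> \<le> \<bar>y - r\<bar>"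
  using assms by (simp add: min_def max_def abs_if split: if_splits) linarith?

lemma K3a:
  fixes a b x y r :: real
  assumes "r \<le> a" "a \<le> b" "x \<le> y"
  shows "(a - r) + \<bar>r - min r y\<bar> + \<bar>b - max r y\<bar> - \<bar>a - x\<bar> - \<bar>b - y\<bar> \<le> \<bar>x - r\<bar>"
  using assms by (simp add: min_def max_def abs_if split: if_splits) linarith?

lemma K3b:
  fixes a b x y r :: real
  assumes "r \<le> a" "a \<le> b" "x \<le> y"
  shows "(a - r) + \<bar>r - min x r\<bar> + \<bar>b - max x r\<bar> - \<bar>a - x\<bar> - \<bar>b - y\<bar> \<le> \<bar>y - r\<bar>"
  using assms by (simp add: min_def max_def abs_if split: if_splits) linarith?

lemma K4a:
  fixes a b x y r :: real
  assumes "b \<le> r" "a \<le> b" "x \<le> y"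
  shows "(r - b) + \<bar>a - min r y\<bar> + \<bar>r - max r y\<bar> - \<bar>a - x\<bar> - \<bar>b - y\<bar> \<le> \<bar>x - r\<bar>"
  using assms by (simp add: min_def max_def abs_if split: if_splits) linarith?

lemma K4b:
  fixes a b x y r :: real
  assumes "b \<le> r" "a \<le> b" "x \<le> y"
  shows "(r - b) + \<bar>a - min x r\<bar> + \<bar>r - max x r\<bar> - \<bar>a - x\<bar> - \<bar>b - y\<bar> \<le> \<bar>y - r\<bar>"
  using assms by (simp add: min_def max_def abs_if split: if_splits) linarith?


lemma step:
  assumes ab: "a \<le> b" and xy: "x \<le> y" and l0: "0 \<le> lam" and l1: "lam \<le> 1"
  shows "snd (lambdadc_step lam (a,b) r p)
         + Phi lam (fst (lambdadc_step lam (a,b) r p)) (fst (ftp_step (x,y) r p))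
         \<le> (1+lam) * snd (ftp_step (x,y) r p) + Phi lam (a,b) (x,y)
       \<and> fst (fst (lambdadc_step lam (a,b) r p)) \<le> snd (fst (lambdadc_step lam (a,b) r p))"
proof (cases "r \<le> a")
  case True
  have e: "lambdadc_step lam (a,b) r p = ((r,b), a - r)" using True by (simp add: lambdadc_step_def)
  show ?thesis unfolding e ftp_step_eq
    using out_gen[OF l0, of a r b b] K3a[OF True ab xy] K3b[OF True ab xy] True ab by auto
next
  case F1: False
  show ?thesis
  proof (cases "b \<le> r")
    case True
    have e: "lambdadc_step lam (a,b) r p = ((a,r), r - b)" using True F1 by (simp add: lambdadc_step_def)
    show ?thesis unfolding e ftp_step_eq
      using out_gen[OF l0, of a a r b] K4a[OF True ab xy] K4b[OF True ab xy] True ab by auto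
  next
    case F2: False
    show ?thesis
    proof (cases "p = 1")
      case True
      define t where "t = (if lam * (r - a) \<le> b - r then r - a else (b - r) / lam)"
      have e: "lambdadc_step lam (a,b) r p = ((a + t, b - lam * t), (1 + lam) * t)"
        using True F1 F2 by (simp add: lambdadc_step_def t_def Let_def)
      have tb: "0 \<le> t \<and> t \<le> r - a \<and> lam * t \<le> b - r"
      proof (cases "lam * (r - a) \<le> b - r")
        case True then show ?thesis using F1 by (simp add: t_def)
      next
        case False
        have lp: "lam > 0"
        proof (rule ccontr)
          assume "\<not> lam > 0" then have "lam = 0" using l0 by simp
          then show False using False F1 F2 by simp
        qed
        then have "lam * t = b - r" using False by (simp add: t_def)
        moreover have "t < r - a" using False lp by (simp add: t_def divide_less_eq mult.commute)
        moreover have "0 \<le> t" using F1 F2 False lp by (simp add: t_def)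
        ultimately show ?thesis by simp
      qed
      have ut: "lam * t \<le> t" using tb l1 mult_right_le_one_le[of t lam] l0 by (simp add: mult.commute)
      have "0 \<le> lam * t" using tb l0 by simp
      then have K: "t - lam * t + \<bar>a + t - min r y\<bar> + \<bar>b - lam * t - max r y\<bar> - \<bar>a - x\<bar> - \<bar>b - y\<bar> \<le> \<bar>x - r\<bar>"
        using K1[of a r b x y "lam*t" t] F1 F2 xy tb ut by simp
      have o: "a + t \<le> b - lam * t" using tb by simp
      show ?thesis unfolding e ftp_step_eq using True o mid_gen[OF l0 refl refl refl K] by simp
    next
      case False
      define t where "t = (if lam * (b - r) \<le> r - a then b - r else (r - a) / lam)"
      have e: "lambdadc_step lam (a,b) r p = ((a + lam * t, b - t), (1 + lam) * t)"
        using False F1 F2 by (simp add: lambdadc_step_def t_def Let_def)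
      have tb: "0 \<le> t \<and> t \<le> b - r \<and> lam * t \<le> r - a"
      proof (cases "lam * (b - r) \<le> r - a")
        case True then show ?thesis using F2 by (simp add: t_def)
      next
        case False
        have lp: "lam > 0"
        proof (rule ccontr)
          assume "\<not> lam > 0" then have "lam = 0" using l0 by simp
          then show False using False F1 F2 by simp
        qed
        then have "lam * t = r - a" using False by (simp add: t_def)
        moreover have "t < b - r" using False lp by (simp add: t_def divide_less_eq mult.commute)
        moreover have "0 \<le> t" using F1 F2 False lp by (simp add: t_def)
        ultimately show ?thesis by simp
      qed
      have ut: "lam * t \<le> t" using tb l1 mult_right_le_one_le[of t lam] l0 by (simp add: mult.commute)
      have "0 \<le> lam * t" using tb l0 by simp
      then have K: "t - lam * t + \<bar>a + lam * t - min x r\<bar> + \<bar>b - t - max x r\<bar> - \<bar>a - x\<bar> - \<bar>b - y\<bar> \<le> \<bar>y - r\<bar>"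
        using K2[of a r b x y "lam*t" t] F1 F2 xy tb ut by simp
      have o: "a + lam * t \<le> b - t" using tb by simp
      show ?thesis unfolding e ftp_step_eq using False o mid_gen2[OF l0 refl refl refl K] by simp
    qed
  qed
qed

lemma main:
  assumes l0: "0 \<le> lam" and l1: "lam \<le> 1"
  shows "\<forall>a b x y. a \<le> b \<longrightarrow> x \<le> y \<longrightarrow>
    lambdadc_cost lam (a,b) I \<le> (1+lam) * ftp_cost (x,y) I + Phi lam (a,b) (x,y)"
proof (induction I)
  case Nil
  show ?case using l0 by (auto simp: Phi_def)
next
  case (Cons q I)
  show ?case
  proof (intro allI impI)
    fix a b x y :: real
    assume ab: "a \<le> b" and xy: "x \<le> y"
    obtain r p where q: "q = (r,p)" by (cases q)
    obtain a' b' C where L: "lambdadc_step lam (a,b) r p = ((a',b'),C)" by (metis prod.collapse)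
    obtain x' y' d where G: "ftp_step (x,y) r p = ((x',y'),d)" by (metis prod.collapse)
    have ab': "a' \<le> b'" using step[OF ab xy l0 l1, of r p] L by simp
    have xy': "x' \<le> y'" using G by (auto simp: ftp_step_eq split: if_splits)
    have S: "C + Phi lam (a',b') (x',y') \<le> (1+lam)*d + Phi lam (a,b) (x,y)"
      using step[OF ab xy l0 l1, of r p] L G by simp
    have IH: "lambdadc_cost lam (a',b') I \<le> (1+lam) * ftp_cost (x',y') I + Phi lam (a',b') (x',y')"
      using Cons.IH ab' xy' by blast
    have "lambdadc_cost lam (a,b) (q # I) = C + lambdadc_cost lam (a',b') I" using L q by simp
    moreover have "ftp_cost (x,y) (q # I) = d + ftp_cost (x',y') I" using G q by simp
    ultimately show "lambdadc_cost lam (a,b) (q # I) \<le> (1+lam) * ftp_cost (x,y) (q # I) + Phi lam (a,b) (x,y)"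
      using S IH l0 by (simp add: algebra_simps)
  qed
qed

theorem lemma5:
  fixes s0 :: config
  assumes "fst s0 \<le> snd s0"
  shows "\<exists>c \<ge> 0. \<forall>lam :: real. \<forall>I :: (real \<times> nat) list.
           0 \<le> lam \<longrightarrow> lam \<le> 1 \<longrightarrow> (\<forall>x \<in> set I. snd x \<in> {1, 2}) \<longrightarrow>
           lambdadc_cost lam s0 I \<le> (1 + lam) * ftp_cost s0 I + c"
proof (intro exI[of _ "snd s0 - fst s0"] conjI allI impI)
  show "0 \<le> snd s0 - fst s0" using assms by simp
  fix lam :: real and I :: "(real \<times> nat) list"
  assume l0: "0 \<le> lam" and l1: "lam \<le> 1"
  obtain a b where s: "s0 = (a,b)" by (cases s0)
  have ab: "a \<le> b" using assms s by simp
  have "lambdadc_cost lam (a,b) I \<le> (1+lam) * ftp_cost (a,b) I + Phi lam (a,b) (a,b)"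
    using main[OF l0 l1] ab by blast
  moreover have "Phi lam (a,b) (a,b) \<le> b - a"
    using ab l0 l1 mult_left_le_one_le[of "b - a" lam] by (simp add: Phi_def)
  ultimately show "lambdadc_cost lam s0 I \<le> (1 + lam) * ftp_cost s0 I + (snd s0 - fst s0)"
    using s by simp
qed

end
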